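(* Let $\mathcal{R}$ be a non-closed linear manifold in a Hilbert space $\mathcal{H}$. Then the following are equivalent: (i) there exists an orthogonal projection $P$ in $\mathcal{H}$ such that $\operatorname{ran} P\cap\mathcal{R}=\{0\}$ and $\operatorname{ran}(I-P)\cap\mathcal{R}=\{0\}$; (ii) there exists a fundamental symmetry $J$ in $\mathcal{H}$ such that $J\mathcal{R}\cap\mathcal{R}=\{0\}$.
   Context: $\mathcal{H}$ is a complex, infinite-dimensional, separable Hilbert space. A linear manifold is a (not necessarily closed) linear subset. A fundamental symmetry is a bounded operator $J$ on $\mathcal{H}$ with $J=J^*=J^{-1}$ (equivalently $J=2P-I$ for an orthogonal projection $P$). *)

theory Defs
  imports "HOL-Analysis.Analysis"
begin

text \<open>The complex, infinite-dimensional, separable Hilbert space is modelled concretely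
as l2(N) of square-summable complex sequences (every such space is unitarily
isomorphic to it).\<close>

type_synonym vec = "nat \<Rightarrow> complex"

definition l2 :: "vec set" where
  "l2 = {x. summable (\<lambda>n. (cmod (x n))\<^sup>2)}"

definition l2_inner :: "vec \<Rightarrow> vec \<Rightarrow> complex" where
  "l2_inner x y = (\<Sum>n. cnj (x n) * y n)"

definition l2_norm :: "vec \<Rightarrow> real" where
  "l2_norm x = sqrt (\<Sum>n. (cmod (x n))\<^sup>2)"

definition vzero :: vec where "vzero = (\<lambda>n. 0)"
definition vadd :: "vec \<Rightarrow> vec \<Rightarrow> vec" where "vadd x y = (\<lambda>n. x n + y n)"
definition vsub :: "vec \<Rightarrow> vec \<Rightarrow> vec" where "vsub x y = (\<lambda>n. x n - y n)"
definition vscale :: "complex \<Rightarrow> vec \<Rightarrow> vec" where "vscale c x = (\<lambda>n. c * x n)"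

definition linear_manifold :: "vec set \<Rightarrow> bool" where
  "linear_manifold R \<longleftrightarrow> R \<subseteq> l2 \<and> vzero \<in> R \<and>
     (\<forall>x\<in>R. \<forall>y\<in>R. vadd x y \<in> R) \<and> (\<forall>c. \<forall>x\<in>R. vscale c x \<in> R)"

definition l2_closed :: "vec set \<Rightarrow> bool" where
  "l2_closed R \<longleftrightarrow> (\<forall>s y. (\<forall>k. s k \<in> R) \<longrightarrow> y \<in> l2 \<longrightarrow>
      (\<lambda>k. l2_norm (vsub (s k) y)) \<longlonglongrightarrow> 0 \<longrightarrow> y \<in> R)"

text \<open>Bounded (everywhere defined) linear operator on l2; only its values on l2 matter.\<close>
definition bounded_op :: "(vec \<Rightarrow> vec) \<Rightarrow> bool" where
  "bounded_op T \<longleftrightarrow> (\<forall>x\<in>l2. T x \<in> l2) \<and>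
     (\<forall>x\<in>l2. \<forall>y\<in>l2. T (vadd x y) = vadd (T x) (T y)) \<and>
     (\<forall>c. \<forall>x\<in>l2. T (vscale c x) = vscale c (T x)) \<and>
     (\<exists>C. \<forall>x\<in>l2. l2_norm (T x) \<le> C * l2_norm x)"

definition selfadjoint_op :: "(vec \<Rightarrow> vec) \<Rightarrow> bool" where
  "selfadjoint_op T \<longleftrightarrow> (\<forall>x\<in>l2. \<forall>y\<in>l2. l2_inner (T x) y = l2_inner x (T y))"

definition orth_proj :: "(vec \<Rightarrow> vec) \<Rightarrow> bool" where
  "orth_proj P \<longleftrightarrow> bounded_op P \<and> selfadjoint_op P \<and> (\<forall>x\<in>l2. P (P x) = P x)"

definition fund_sym :: "(vec \<Rightarrow> vec) \<Rightarrow> bool" where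
  "fund_sym J \<longleftrightarrow> bounded_op J \<and> selfadjoint_op J \<and> (\<forall>x\<in>l2. J (J x) = x)"

end

theory Submission
  imports Defs
begin

lemma l2_sq_bound:
  fixes u v :: complex
  shows "(cmod (u + v))\<^sup>2 \<le> 2 * (cmod u)\<^sup>2 + 2 * (cmod v)\<^sup>2"
proof -
  have "cmod (u + v) \<le> cmod u + cmod v" by (rule norm_triangle_ineq)
  hence "(cmod (u + v))\<^sup>2 \<le> (cmod u + cmod v)\<^sup>2"
    by (simp add: power_mono)
  also have "\<dots> \<le> 2 * (cmod u)\<^sup>2 + 2 * (cmod v)\<^sup>2"
    using sum_squares_bound[of "cmod u" "cmod v"] by (simp add: power2_sum)
  finally show ?thesis .
qed

lemma l2_vadd: "x \<in> l2 \<Longrightarrow> y \<in> l2 \<Longrightarrow> vadd x y \<in> l2"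
  unfolding l2_def vadd_def
  apply simp
  apply (rule summable_comparison_test[where g="\<lambda>n. 2 * (cmod (x n))\<^sup>2 + 2 * (cmod (y n))\<^sup>2"])
  using l2_sq_bound by (auto intro: summable_add summable_mult)

lemma l2_vscale: "x \<in> l2 \<Longrightarrow> vscale c x \<in> l2"
  unfolding l2_def vscale_def
  by (simp add: norm_mult power_mult_distrib summable_mult)

lemma l2_vzero: "vzero \<in> l2"
  unfolding l2_def vzero_def by simp

lemma l2_norm_sq: "x \<in> l2 \<Longrightarrow> (l2_norm x)\<^sup>2 = (\<Sum>n. (cmod (x n))\<^sup>2)"
proof -
  assume "x \<in> l2"
  hence "summable (\<lambda>n. (cmod (x n))\<^sup>2)" by (simp add: l2_def)
  hence "0 \<le> (\<Sum>n. (cmod (x n))\<^sup>2)" by (rule suminf_nonneg) simp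
  thus ?thesis by (simp add: l2_norm_def)
qed

lemma l2_norm_nonneg: "x \<in> l2 \<Longrightarrow> l2_norm x \<ge> 0"
proof -
  assume "x \<in> l2"
  hence "summable (\<lambda>n. (cmod (x n))\<^sup>2)" by (simp add: l2_def)
  hence "0 \<le> (\<Sum>n. (cmod (x n))\<^sup>2)" by (rule suminf_nonneg) simp
  thus ?thesis by (simp add: l2_norm_def)
qed

lemma l2_norm_add_sq:
  assumes "x \<in> l2" "y \<in> l2"
  shows "(l2_norm (vadd x y))\<^sup>2 \<le> 2 * (l2_norm x)\<^sup>2 + 2 * (l2_norm y)\<^sup>2"
proof -
  have sx: "summable (\<lambda>n. (cmod (x n))\<^sup>2)" and sy: "summable (\<lambda>n. (cmod (y n))\<^sup>2)"
    using assms unfolding l2_def by auto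
  have sxy: "summable (\<lambda>n. (cmod (x n + y n))\<^sup>2)"
    using l2_vadd[OF assms] unfolding l2_def vadd_def by simp
  have "(l2_norm (vadd x y))\<^sup>2 = (\<Sum>n. (cmod (x n + y n))\<^sup>2)"
    using l2_norm_sq[OF l2_vadd[OF assms]] by (simp add: vadd_def)
  also have "\<dots> \<le> (\<Sum>n. 2 * (cmod (x n))\<^sup>2 + 2 * (cmod (y n))\<^sup>2)"
    by (rule suminf_le) (use l2_sq_bound sxy sx sy in \<open>auto intro: summable_add summable_mult\<close>)
  also have "\<dots> = 2 * (\<Sum>n. (cmod (x n))\<^sup>2) + 2 * (\<Sum>n. (cmod (y n))\<^sup>2)"
    using sx sy by (simp add: suminf_add[symmetric] suminf_mult summable_mult)
  finally show ?thesis using l2_norm_sq assms by simp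
qed

lemma l2_norm_scale_sq:
  assumes "x \<in> l2"
  shows "(l2_norm (vscale c x))\<^sup>2 = (cmod c)\<^sup>2 * (l2_norm x)\<^sup>2"
proof -
  have sx: "summable (\<lambda>n. (cmod (x n))\<^sup>2)" using assms unfolding l2_def by auto
  show ?thesis
    using l2_norm_sq[OF l2_vscale[OF assms]] l2_norm_sq[OF assms] sx
    by (simp add: vscale_def norm_mult power_mult_distrib suminf_mult)
qed

lemma inner_summable:
  assumes "x \<in> l2" "y \<in> l2"
  shows "summable (\<lambda>n. cnj (x n) * y n)"
proof -
  have sx: "summable (\<lambda>n. (cmod (x n))\<^sup>2)" and sy: "summable (\<lambda>n. (cmod (y n))\<^sup>2)"
    using assms unfolding l2_def by auto
  show ?thesis
    apply (rule summable_comparison_test[where g="\<lambda>n. (cmod (x n))\<^sup>2 + (cmod (y n))\<^sup>2"])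
  proof (intro exI[of _ 0] allI impI)
    fix n
    have "2 * cmod (x n) * cmod (y n) \<le> (cmod (x n))\<^sup>2 + (cmod (y n))\<^sup>2"
      by (rule sum_squares_bound)
    moreover have "0 \<le> cmod (x n) * cmod (y n)" by simp
    ultimately have "cmod (x n) * cmod (y n) \<le> (cmod (x n))\<^sup>2 + (cmod (y n))\<^sup>2"
      by linarith
    thus "norm (cnj (x n) * y n) \<le> (cmod (x n))\<^sup>2 + (cmod (y n))\<^sup>2"
      by (simp add: norm_mult)
  next
    show "summable (\<lambda>n. (cmod (x n))\<^sup>2 + (cmod (y n))\<^sup>2)"
      using sx sy by (rule summable_add)
  qed
qed

lemma inner_add_left:
  assumes "a \<in> l2" "b \<in> l2" "y \<in> l2"
  shows "l2_inner (vadd a b) y = l2_inner a y + l2_inner b y"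
  unfolding l2_inner_def vadd_def
  using suminf_add[OF inner_summable[OF assms(1,3)] inner_summable[OF assms(2,3)]]
  by (simp add: distrib_right)

lemma inner_add_right:
  assumes "a \<in> l2" "b \<in> l2" "y \<in> l2"
  shows "l2_inner y (vadd a b) = l2_inner y a + l2_inner y b"
  unfolding l2_inner_def vadd_def
  using suminf_add[OF inner_summable[OF assms(3,1)] inner_summable[OF assms(3,2)]]
  by (simp add: distrib_left)

lemma inner_scale_left:
  assumes "a \<in> l2" "y \<in> l2"
  shows "l2_inner (vscale c a) y = cnj c * l2_inner a y"
  unfolding l2_inner_def vscale_def
  using suminf_mult[OF inner_summable[OF assms], of "cnj c"]
  by (simp add: mult.assoc)

lemma inner_scale_right:
  assumes "a \<in> l2" "y \<in> l2"
  shows "l2_inner y (vscale c a) = c * l2_inner y a"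
  unfolding l2_inner_def vscale_def
  using suminf_mult[OF inner_summable[OF assms(2,1)], of "c"]
  by (simp add: mult.assoc mult.left_commute)

lemma bop_l2: "bounded_op T \<Longrightarrow> x \<in> l2 \<Longrightarrow> T x \<in> l2"
  unfolding bounded_op_def by blast

lemma bop_lin:
  assumes "bounded_op T" "a \<in> l2" "b \<in> l2"
  shows "T (vadd (vscale c a) (vscale d b)) = vadd (vscale c (T a)) (vscale d (T b))"
  using assms l2_vscale unfolding bounded_op_def by metis

lemma bop_zero:
  assumes "bounded_op T"
  shows "T vzero = vzero"
proof -
  have "vscale 0 vzero = vzero" by (simp add: vscale_def vzero_def)
  hence "T vzero = T (vscale 0 vzero)" by simp
  also have "\<dots> = vscale 0 (T vzero)" using assms l2_vzero unfolding bounded_op_def by blast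
  also have "\<dots> = vzero" by (simp add: vscale_def vzero_def)
  finally show ?thesis .
qed

lemma combo:
  assumes S: "bounded_op S" "selfadjoint_op S"
  shows "bounded_op (\<lambda>x. vadd (vscale (complex_of_real a) x) (vscale (complex_of_real b) (S x)))
    \<and> selfadjoint_op (\<lambda>x. vadd (vscale (complex_of_real a) x) (vscale (complex_of_real b) (S x)))"
    (is "bounded_op ?T \<and> _")
proof
  have Sl: "\<And>x. x \<in> l2 \<Longrightarrow> S x \<in> l2" using S(1) bop_l2 by blast
  have Tl: "\<And>x. x \<in> l2 \<Longrightarrow> ?T x \<in> l2" using Sl l2_vadd l2_vscale by blast
  obtain C where C: "\<And>x. x \<in> l2 \<Longrightarrow> l2_norm (S x) \<le> C * l2_norm x"
    using S(1) unfolding bounded_op_def by blast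
  have add: "?T (vadd x y) = vadd (?T x) (?T y)" if "x \<in> l2" "y \<in> l2" for x y
  proof -
    have "S (vadd x y) = vadd (S x) (S y)" using S(1) that unfolding bounded_op_def by blast
    thus ?thesis by (auto simp: vadd_def vscale_def algebra_simps)
  qed
  have scl: "?T (vscale c x) = vscale c (?T x)" if "x \<in> l2" for c x
  proof -
    have "S (vscale c x) = vscale c (S x)" using S(1) that unfolding bounded_op_def by blast
    thus ?thesis by (auto simp: vadd_def vscale_def algebra_simps)
  qed
  define K where "K = 2 * a\<^sup>2 + 2 * b\<^sup>2 * C\<^sup>2"
  have bnd: "l2_norm (?T x) \<le> sqrt K * l2_norm x" if x: "x \<in> l2" for x
  proof -
    have nS: "0 \<le> l2_norm (S x)" using l2_norm_nonneg Sl x by blast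
    have nx: "0 \<le> l2_norm x" using l2_norm_nonneg x by blast
    have "(l2_norm (S x))\<^sup>2 \<le> (C * l2_norm x)\<^sup>2"
      using power_mono[OF C[OF x] nS] .
    hence sq: "(l2_norm (S x))\<^sup>2 \<le> C\<^sup>2 * (l2_norm x)\<^sup>2" by (simp add: power_mult_distrib)
    have "(l2_norm (?T x))\<^sup>2 \<le> 2 * (l2_norm (vscale (complex_of_real a) x))\<^sup>2
        + 2 * (l2_norm (vscale (complex_of_real b) (S x)))\<^sup>2"
      by (rule l2_norm_add_sq) (use l2_vscale x Sl in auto)
    also have "\<dots> = 2 * a\<^sup>2 * (l2_norm x)\<^sup>2 + 2 * b\<^sup>2 * (l2_norm (S x))\<^sup>2"
      using l2_norm_scale_sq x Sl by simp
    also have "\<dots> \<le> 2 * a\<^sup>2 * (l2_norm x)\<^sup>2 + 2 * b\<^sup>2 * (C\<^sup>2 * (l2_norm x)\<^sup>2)"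
      using sq by (simp add: mult_left_mono)
    also have "\<dots> = K * (l2_norm x)\<^sup>2" by (simp add: K_def algebra_simps)
    finally have le: "(l2_norm (?T x))\<^sup>2 \<le> K * (l2_norm x)\<^sup>2" .
    have "l2_norm (?T x) = sqrt ((l2_norm (?T x))\<^sup>2)"
      using l2_norm_nonneg[OF Tl[OF x]] by simp
    also have "\<dots> \<le> sqrt (K * (l2_norm x)\<^sup>2)" using le real_sqrt_le_mono by blast
    also have "\<dots> = sqrt K * l2_norm x" using nx by (simp add: real_sqrt_mult)
    finally show ?thesis .
  qed
  show "bounded_op ?T" unfolding bounded_op_def
    using Tl add scl bnd by blast
  show "selfadjoint_op ?T" unfolding selfadjoint_op_def
  proof (intro ballI)
    fix x y assume x: "x \<in> l2" and y: "y \<in> l2"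
    have sa: "l2_inner (S x) y = l2_inner x (S y)" using S(2) x y unfolding selfadjoint_op_def by blast
    have "l2_inner (?T x) y = complex_of_real a * l2_inner x y + complex_of_real b * l2_inner (S x) y"
      using x y Sl by (simp add: inner_add_left inner_scale_left l2_vscale)
    also have "\<dots> = l2_inner x (?T y)"
      using x y Sl sa by (simp add: inner_add_right inner_scale_right l2_vscale)
    finally show "l2_inner (?T x) y = l2_inner x (?T y)" .
  qed
qed

theorem proposition3p1:
  assumes "linear_manifold R" and "\<not> l2_closed R"
  shows "(\<exists>P. orth_proj P \<and> P ` l2 \<inter> R = {vzero} \<and> (\<lambda>x. vsub x (P x)) ` l2 \<inter> R = {vzero})
     \<longleftrightarrow> (\<exists>J. fund_sym J \<and> J ` R \<inter> R = {vzero})"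
proof
  have Rl2: "R \<subseteq> l2" and R0: "vzero \<in> R"
    and Radd: "\<And>x y. x \<in> R \<Longrightarrow> y \<in> R \<Longrightarrow> vadd x y \<in> R"
    and Rscl: "\<And>c x. x \<in> R \<Longrightarrow> vscale c x \<in> R"
    using assms(1) unfolding linear_manifold_def by blast+
  {
    assume "\<exists>P. orth_proj P \<and> P ` l2 \<inter> R = {vzero} \<and> (\<lambda>x. vsub x (P x)) ` l2 \<inter> R = {vzero}"
    then obtain P where oP: "orth_proj P" and P1: "P ` l2 \<inter> R = {vzero}"
      and P2: "(\<lambda>x. vsub x (P x)) ` l2 \<inter> R = {vzero}" by blast
    have bP: "bounded_op P" and sP: "selfadjoint_op P" and iP: "\<And>x. x \<in> l2 \<Longrightarrow> P (P x) = P x"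
      using oP unfolding orth_proj_def by blast+
    define J where "J = (\<lambda>x. vadd (vscale (complex_of_real (-1)) x) (vscale (complex_of_real 2) (P x)))"
    have cJ: "bounded_op J \<and> selfadjoint_op J" unfolding J_def by (rule combo[OF bP sP])
    have JJ: "J (J x) = x" if x: "x \<in> l2" for x
    proof -
      have Px: "P x \<in> l2" using bP x bop_l2 by blast
      have "P (J x) = vadd (vscale (complex_of_real (-1)) (P x)) (vscale (complex_of_real 2) (P (P x)))"
        unfolding J_def by (rule bop_lin[OF bP x Px])
      hence "P (J x) = vadd (vscale (complex_of_real (-1)) (P x)) (vscale (complex_of_real 2) (P x))"
        using iP[OF x] by simp
      thus ?thesis unfolding J_def by (auto simp: vadd_def vscale_def algebra_simps)
    qed
    have "fund_sym J" unfolding fund_sym_def using cJ JJ by blast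
    moreover have "J ` R \<inter> R = {vzero}"
    proof
      show "{vzero} \<subseteq> J ` R \<inter> R" using bop_zero[of J] cJ R0 by force
    next
      show "J ` R \<inter> R \<subseteq> {vzero}"
      proof
        fix y assume "y \<in> J ` R \<inter> R"
        then obtain x where x: "x \<in> R" and y: "y = J x" "y \<in> R" by blast
        have xl: "x \<in> l2" using x Rl2 by blast
        have "vadd x (J x) = P (vscale 2 x)"
          using bP xl unfolding bounded_op_def J_def by (auto simp: vadd_def vscale_def)
        moreover have "vadd x (J x) \<in> R" using Radd x y by simp
        ultimately have "vadd x (J x) \<in> P ` l2 \<inter> R" using l2_vscale[OF xl] by auto
        hence "vadd x (J x) = vzero" using P1 by blast
        hence "\<And>n. vadd x (J x) n = 0" by (simp add: vzero_def)
        hence "\<And>n. P x n = 0" by (simp add: J_def vadd_def vscale_def)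
        hence Px0: "P x = vzero" by (auto simp: vzero_def)
        have "x = vsub x (P x)" using Px0 by (simp add: vsub_def vzero_def)
        hence "x \<in> (\<lambda>x. vsub x (P x)) ` l2 \<inter> R" using xl x by auto
        hence "x = vzero" using P2 by blast
        thus "y \<in> {vzero}" using y bop_zero cJ by simp
      qed
    qed
    ultimately show "\<exists>J. fund_sym J \<and> J ` R \<inter> R = {vzero}" by blast
  }
  {
    assume "\<exists>J. fund_sym J \<and> J ` R \<inter> R = {vzero}"
    then obtain J where fJ: "fund_sym J" and J1: "J ` R \<inter> R = {vzero}" by blast
    have bJ: "bounded_op J" and sJ: "selfadjoint_op J" and iJ: "\<And>x. x \<in> l2 \<Longrightarrow> J (J x) = x"
      using fJ unfolding fund_sym_def by blast+
    define P where "P = (\<lambda>x. vadd (vscale (complex_of_real (1/2)) x) (vscale (complex_of_real (1/2)) (J x)))"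
    have cP: "bounded_op P \<and> selfadjoint_op P" unfolding P_def by (rule combo[OF bJ sJ])
    have JP: "J (P x) = P x" if x: "x \<in> l2" for x
    proof -
      have Jx: "J x \<in> l2" using bJ x bop_l2 by blast
      have "J (P x) = vadd (vscale (complex_of_real (1/2)) (J x)) (vscale (complex_of_real (1/2)) (J (J x)))"
        unfolding P_def by (rule bop_lin[OF bJ x Jx])
      thus ?thesis using iJ[OF x] unfolding P_def by (auto simp: vadd_def vscale_def algebra_simps)
    qed
    have PP: "P (P x) = P x" if x: "x \<in> l2" for x
      using JP[OF x] unfolding P_def by (auto simp: vadd_def vscale_def algebra_simps)
    have "orth_proj P" unfolding orth_proj_def using cP PP by blast
    moreover have "P ` l2 \<inter> R = {vzero}"
    proof
      have "P vzero = vzero" using bop_zero[OF bJ] unfolding P_def by (simp add: vadd_def vscale_def vzero_def)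
      thus "{vzero} \<subseteq> P ` l2 \<inter> R" using l2_vzero R0 by force
    next
      show "P ` l2 \<inter> R \<subseteq> {vzero}"
      proof
        fix y assume "y \<in> P ` l2 \<inter> R"
        then obtain x where x: "x \<in> l2" and y: "y = P x" "y \<in> R" by blast
        have "J y = y" using JP[OF x] y by simp
        hence "y \<in> J ` R \<inter> R" using y by force
        thus "y \<in> {vzero}" using J1 by blast
      qed
    qed
    moreover have "(\<lambda>x. vsub x (P x)) ` l2 \<inter> R = {vzero}"
    proof
      have "P vzero = vzero" using bop_zero[OF bJ] unfolding P_def by (simp add: vadd_def vscale_def vzero_def)
      hence "vsub vzero (P vzero) = vzero" by (simp add: vsub_def vzero_def)
      thus "{vzero} \<subseteq> (\<lambda>x. vsub x (P x)) ` l2 \<inter> R" using l2_vzero R0 by force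
    next
      show "(\<lambda>x. vsub x (P x)) ` l2 \<inter> R \<subseteq> {vzero}"
      proof
        fix y assume "y \<in> (\<lambda>x. vsub x (P x)) ` l2 \<inter> R"
        then obtain x where x: "x \<in> l2" and y: "y = vsub x (P x)" "y \<in> R" by blast
        have Jx: "J x \<in> l2" using bJ x bop_l2 by blast
        have ye: "y = vadd (vscale (1/2) x) (vscale (-1/2) (J x))"
          using y unfolding P_def by (auto simp: vsub_def vadd_def vscale_def algebra_simps)
        have "J y = vadd (vscale (1/2) (J x)) (vscale (-1/2) (J (J x)))"
          unfolding ye by (rule bop_lin[OF bJ x Jx])
        hence Jy: "J y = vscale (-1) y" using iJ[OF x] ye by (auto simp: vadd_def vscale_def algebra_simps)
        have yl: "y \<in> l2" using y Rl2 by blast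
        have "J (vscale (-1) y) = vscale (-1) (J y)" using bJ yl unfolding bounded_op_def by blast
        hence "J (vscale (-1) y) = y" using Jy by (simp add: vscale_def)
        moreover have "vscale (-1) y \<in> R" using Rscl y by blast
        ultimately have "y \<in> J ` R \<inter> R" using y by force
        thus "y \<in> {vzero}" using J1 by blast
      qed
    qed
    ultimately show "\<exists>P. orth_proj P \<and> P ` l2 \<inter> R = {vzero} \<and> (\<lambda>x. vsub x (P x)) ` l2 \<inter> R = {vzero}"
      by blast
  }
qed

end
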